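(* For every integer $c\ge 3$ and every instance with two groups of binary agents, there exists an allocation that is 1-out-of-$c$ MMS-fair for at least a $1-1/2^{c-1}$ fraction of the agents in each group.
   Context: There is a finite set $G$ of goods and two groups $A_1,A_2$ of agents, $n_i\ge1$ agents in $A_i$. A binary agent has an additive utility with $u_a(\{g\})\in\{0,1\}$. An allocation is a partition $(G_1,G_2)$ of $G$; agents of $A_i$ get $u_a(G_i)$. For an integer $c$, $\mathrm{MMS}^c_a(G)$ is the maximum, over partitions of $G$ into $c$ sets, of the minimum of $u_a$ over the sets. The allocation is 1-out-of-$c$ MMS-fair for $a\in A_i$ if $u_a(G_i)\ge \mathrm{MMS}^c_a(G)$; for a binary agent desiring $r$ goods this means $G_i$ contains at least $\lfloor r/c\rfloor$ goods she desires. *)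

theory Defs
  imports Main Complex_Main
begin

definition util :: "('g \<Rightarrow> nat) \<Rightarrow> 'g set \<Rightarrow> nat" where
  "util u S = (\<Sum>g\<in>S. u g)"

definition binary_on :: "'g set \<Rightarrow> ('g \<Rightarrow> nat) \<Rightarrow> bool" where
  "binary_on G u \<longleftrightarrow> (\<forall>g\<in>G. u g \<in> {0, 1})"

text \<open>Partitions of G into c (possibly empty) parts are encoded as labellings
  p : G -> {0..<c}; part i is {g\<in>G. p g = i}.
  MMS^c(G) = max over partitions of the minimum utility of a part.\<close>
definition MMS :: "nat \<Rightarrow> ('g \<Rightarrow> nat) \<Rightarrow> 'g set \<Rightarrow> nat" where
  "MMS c u G = Max {Min {util u {g\<in>G. p g = i} | i. i < c} | p. \<forall>g\<in>G. p g < c}"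

definition mms_fair :: "nat \<Rightarrow> ('g \<Rightarrow> nat) \<Rightarrow> 'g set \<Rightarrow> 'g set \<Rightarrow> bool" where
  "mms_fair c u G B \<longleftrightarrow> util u B \<ge> MMS c u G"

end

theory Submission
  imports Defs
begin


definition Bs :: "nat \<Rightarrow> nat \<Rightarrow> nat" where "Bs n m = (\<Sum>j<m. n choose j)"

lemma Bs_0[simp]: "Bs n 0 = 0" by (simp add: Bs_def)
lemma Bs_Suc: "Bs n (Suc m) = Bs n m + (n choose m)" by (simp add: Bs_def)
lemma Bs_mono: "m \<le> m' \<Longrightarrow> Bs n m \<le> Bs n m'"
  unfolding Bs_def by (rule sum_mono2) auto

lemma Bs_pascal: "Bs (Suc N) m = Bs N m + Bs N (m - 1)"
proof (induction m)
  case 0 then show ?case by simp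
next
  case (Suc m)
  show ?case
  proof (cases m)
    case 0 then show ?thesis by (simp add: Bs_Suc)
  next
    case (Suc m')
    then show ?thesis using Suc.IH by (simp add: Bs_Suc)
  qed
qed

lemma pow_ge: "1 + c \<le> (2::nat)^c"
  by (induction c) auto

lemma Bs_step: "Bs (n + c) m \<le> Bs n m + c * Bs n (m - 1) + (2^c - 1 - c) * Bs n (m - 2)"
proof (induction c arbitrary: m)
  case 0 then show ?case by simp
next
  case (Suc c)
  define X where "X = 2^c - 1 - c"
  have X: "X + 1 + c = 2^c" using pow_ge[of c] by (simp add: X_def)
  have X2: "2^Suc c - 1 - Suc c = X + X + c" using X by simp
  have "Bs (n + Suc c) m = Bs (n + c) m + Bs (n + c) (m - 1)"
    by (simp add: Bs_pascal)
  also have "\<dots> \<le> (Bs n m + c * Bs n (m - 1) + X * Bs n (m - 2))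
     + (Bs n (m - 1) + c * Bs n (m - 1 - 1) + X * Bs n (m - 1 - 2))"
    using Suc.IH[of m] Suc.IH[of "m - 1"] unfolding X_def by linarith
  also have "\<dots> \<le> (Bs n m + c * Bs n (m - 1) + X * Bs n (m - 2))
     + (Bs n (m - 1) + c * Bs n (m - 2) + X * Bs n (m - 2))"
    using Bs_mono[of "m - 1 - 2" "m - 2" n] by (simp add: numeral_2_eq_2)
  also have "\<dots> = Bs n m + Suc c * Bs n (m - 1) + (X + X + c) * Bs n (m - 2)"
    by (simp add: algebra_simps)
  finally show ?case using X2 by simp
qed

lemma ratio: "(c * Suc k) choose (Suc k) \<le> c * ((c * Suc k) choose k)"
proof -
  let ?n = "c * Suc k"
  have "Suc k * (?n choose Suc k) = (?n - k) * (?n choose k)"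
    using binomial_absorption[of k ?n] binomial_absorb_comp[of ?n k] by simp
  also have "\<dots> \<le> (c * Suc k) * (?n choose k)" by (intro mult_right_mono) auto
  finally have "Suc k * (?n choose Suc k) \<le> Suc k * (c * (?n choose k))"
    by (simp add: algebra_simps)
  then show ?thesis by (metis mult_le_cancel1 zero_less_Suc)
qed

lemma key: assumes "c \<ge> 3" shows "Bs (c * Suc K) (Suc K) \<le> 2^(c * K)"
proof (induction K)
  case 0 then show ?case by (simp add: Bs_def)
next
  case (Suc K)
  let ?n = "c * Suc K"
  define X where "X = 2^c - 1 - c"
  have X: "X + 1 + c = 2^c" using pow_ge[of c] by (simp add: X_def)
  have cX: "c \<le> X"
  proof -
    have "2 * c + 1 < 2^c" using assms
    proof (induction c rule: dec_induct)
      case base then show ?case by simp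
    next
      case (step n) then show ?case by simp
    qed
    then show ?thesis using X by linarith
  qed
  have e: "c * Suc (Suc K) = ?n + c" by simp
  have "Bs (c * Suc (Suc K)) (Suc (Suc K)) \<le> Bs ?n (Suc (Suc K)) + c * Bs ?n (Suc K) + X * Bs ?n K"
    using Bs_step[of ?n c "Suc (Suc K)"] unfolding e X_def by simp
  also have "\<dots> = Bs ?n (Suc K) + (?n choose Suc K) + c * Bs ?n (Suc K) + X * Bs ?n K"
    by (simp add: Bs_Suc)
  also have "\<dots> \<le> Bs ?n (Suc K) + X * (?n choose K) + c * Bs ?n (Suc K) + X * Bs ?n K"
    using ratio[of c K] cX
    by (meson add_le_mono le_refl mult_le_mono1 order_trans)
  also have "\<dots> = (1 + c + X) * Bs ?n (Suc K)"
    by (simp add: Bs_Suc algebra_simps)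
  also have "\<dots> = 2^c * Bs ?n (Suc K)"
  proof -
    have h: "1 + c + X = 2^c" using X by simp
    show ?thesis by (simp only: h)
  qed
  also have "\<dots> \<le> 2^c * 2^(c*K)" using Suc.IH by simp
  also have "\<dots> = 2^(c * Suc K)" by (simp add: power_add)
  finally show ?case .
qed

lemma key2: assumes "c \<ge> 3" "k * c \<le> n" shows "Bs n k * 2^c \<le> 2^n"
proof (cases k)
  case 0 then show ?thesis by simp
next
  case (Suc K)
  have dbl: "Bs (Suc N) k \<le> 2 * Bs N k" for N
    using Bs_pascal[of N k] Bs_mono[of "k - 1" k N] by simp
  have gen: "Bs (c * Suc K + d) k \<le> 2^d * Bs (c * Suc K) k" for d
  proof (induction d)
    case 0 then show ?case by simp
  next
    case (Suc d)
    have "Bs (c * Suc K + Suc d) k \<le> 2 * Bs (c * Suc K + d) k" using dbl by simp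
    also have "\<dots> \<le> 2 * (2^d * Bs (c * Suc K) k)" using Suc.IH by simp
    finally show ?case by simp
  qed
  obtain d where d: "n = c * Suc K + d" using assms Suc by (metis le_Suc_ex mult.commute)
  have "Bs n k \<le> 2^d * 2^(c*K)" using gen[of d] key[OF assms(1), of K] d Suc
    by (metis mult_le_mono order.refl order_trans)
  then have "Bs n k * 2^c \<le> 2^d * 2^(c*K) * 2^c" by simp
  also have "\<dots> = 2^n" by (simp add: d power_add[symmetric] algebra_simps)
  finally show ?thesis .
qed



lemma count_small: "finite D \<Longrightarrow> card {T. T \<subseteq> D \<and> card T < k} = Bs (card D) k"
proof (induction k)
  case 0 then show ?case by simp
next
  case (Suc k)
  have e: "{T. T \<subseteq> D \<and> card T < Suc k} = {T. T \<subseteq> D \<and> card T < k} \<union> {T. T \<subseteq> D \<and> card T = k}"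
    by auto
  have f: "finite {T. T \<subseteq> D \<and> card T < k}" "finite {T. T \<subseteq> D \<and> card T = k}"
    using Suc.prems by (auto intro: finite_subset[of _ "Pow D"])
  have "card {T. T \<subseteq> D \<and> card T < Suc k} = card {T. T \<subseteq> D \<and> card T < k} + card {T. T \<subseteq> D \<and> card T = k}"
    unfolding e by (rule card_Un_disjoint[OF f]) auto
  then show ?case using Suc n_subsets[of D k] by (simp add: Bs_Suc)
qed

lemma bad_count:
  assumes "finite G" "D \<subseteq> G"
  shows "card {S. S \<subseteq> G \<and> card (S \<inter> D) < k} = Bs (card D) k * 2^(card (G - D))"
proof -
  let ?f = "\<lambda>S. (S \<inter> D, S - D)"
  have inj: "inj_on ?f {S. S \<subseteq> G \<and> card (S \<inter> D) < k}"
  proof (rule inj_onI)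
    fix S T assume "S \<in> {S. S \<subseteq> G \<and> card (S \<inter> D) < k}" "T \<in> {S. S \<subseteq> G \<and> card (S \<inter> D) < k}" "?f S = ?f T"
    then show "S = T" by blast
  qed
  have img: "?f ` {S. S \<subseteq> G \<and> card (S \<inter> D) < k} = {T. T \<subseteq> D \<and> card T < k} \<times> Pow (G - D)"
  proof
    show "?f ` {S. S \<subseteq> G \<and> card (S \<inter> D) < k} \<subseteq> {T. T \<subseteq> D \<and> card T < k} \<times> Pow (G - D)"
      by auto
    show "{T. T \<subseteq> D \<and> card T < k} \<times> Pow (G - D) \<subseteq> ?f ` {S. S \<subseteq> G \<and> card (S \<inter> D) < k}"
    proof
      fix x assume x: "x \<in> {T. T \<subseteq> D \<and> card T < k} \<times> Pow (G - D)"
      obtain T U where xe: "x = (T, U)" by (cases x)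
      have "?f (T \<union> U) = x" using x xe by auto
      moreover have "T \<union> U \<in> {S. S \<subseteq> G \<and> card (S \<inter> D) < k}"
      proof -
        have "(T \<union> U) \<inter> D = T" using x xe by auto
        then show ?thesis using x xe assms by auto
      qed
      ultimately show "x \<in> ?f ` {S. S \<subseteq> G \<and> card (S \<inter> D) < k}" by blast
    qed
  qed
  have "card {S. S \<subseteq> G \<and> card (S \<inter> D) < k} = card ({T. T \<subseteq> D \<and> card T < k} \<times> Pow (G - D))"
    using card_image[OF inj] img by simp
  also have "\<dots> = Bs (card D) k * 2^(card (G - D))"
  proof -
    have "finite D" using assms finite_subset by blast
    then show ?thesis using assms count_small[of D k] card_Pow[of "G - D"]
      by (simp add: card_cartesian_product)
  qed
  finally show ?thesis .
qed

lemma bad_bound: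
  assumes "finite G" "D \<subseteq> G" "c \<ge> 3" "k * c \<le> card D"
  shows "card {S. S \<subseteq> G \<and> card (S \<inter> D) < k} * 2^c \<le> 2^(card G)"
proof -
  have cG: "card G = card D + card (G - D)"
    using assms by (metis card_Diff_subset card_mono diff_add_inverse finite_subset le_add_diff_inverse)
  have "card {S. S \<subseteq> G \<and> card (S \<inter> D) < k} * 2^c = (Bs (card D) k * 2^c) * 2^(card (G - D))"
    using bad_count[OF assms(1,2)] by simp
  also have "\<dots> \<le> 2^(card D) * 2^(card (G - D))"
    using key2[OF assms(3,4)] by simp
  also have "\<dots> = 2^card G" by (simp add: cG power_add)
  finally show ?thesis .
qed

lemma bad_bound_compl:
  assumes "finite G" "D \<subseteq> G" "c \<ge> 3" "k * c \<le> card D"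
  shows "card {S. S \<subseteq> G \<and> card ((G - S) \<inter> D) < k} * 2^c \<le> 2^(card G)"
proof -
  have "{S. S \<subseteq> G \<and> card ((G - S) \<inter> D) < k} = (\<lambda>S. G - S) ` {S. S \<subseteq> G \<and> card (S \<inter> D) < k}"
  proof
    show "{S. S \<subseteq> G \<and> card ((G - S) \<inter> D) < k} \<subseteq> (\<lambda>S. G - S) ` {S. S \<subseteq> G \<and> card (S \<inter> D) < k}"
    proof
      fix S assume "S \<in> {S. S \<subseteq> G \<and> card ((G - S) \<inter> D) < k}"
      then have "S = G - (G - S)" "G - S \<in> {S. S \<subseteq> G \<and> card (S \<inter> D) < k}" by auto
      then show "S \<in> (\<lambda>S. G - S) ` {S. S \<subseteq> G \<and> card (S \<inter> D) < k}" by blast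
    qed
    show "(\<lambda>S. G - S) ` {S. S \<subseteq> G \<and> card (S \<inter> D) < k} \<subseteq> {S. S \<subseteq> G \<and> card ((G - S) \<inter> D) < k}"
    proof
      fix x assume "x \<in> (\<lambda>S. G - S) ` {S. S \<subseteq> G \<and> card (S \<inter> D) < k}"
      then obtain S where "S \<subseteq> G" "card (S \<inter> D) < k" "x = G - S" by blast
      moreover have "G - (G - S) = S" using \<open>S \<subseteq> G\<close> by blast
      ultimately show "x \<in> {S. S \<subseteq> G \<and> card ((G - S) \<inter> D) < k}" by auto
    qed
  qed
  moreover have "inj_on (\<lambda>S. G - S) {S. S \<subseteq> G \<and> card (S \<inter> D) < k}"
    by (rule inj_onI) blast
  ultimately have "card {S. S \<subseteq> G \<and> card ((G - S) \<inter> D) < k} = card {S. S \<subseteq> G \<and> card (S \<inter> D) < k}"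
    by (simp add: card_image)
  then show ?thesis using bad_bound[OF assms] by simp
qed

lemma util_binary:
  assumes "binary_on G u" "S \<subseteq> G" "finite G"
  shows "util u S = card (S \<inter> {g\<in>G. u g = 1})"
proof -
  have fS: "finite S" using assms finite_subset by blast
  have "util u S = (\<Sum>g\<in>S. if u g = 1 then 1 else 0)"
    unfolding util_def using assms by (intro sum.cong) (auto simp: binary_on_def)
  also have "\<dots> = card {g\<in>S. u g = 1}" using fS by (simp add: sum.inter_filter[symmetric])
  also have "{g\<in>S. u g = 1} = S \<inter> {g\<in>G. u g = 1}" using assms by auto
  finally show ?thesis .
qed

lemma MMS_le:
  assumes "finite G" "c > 0"
  shows "MMS c u G \<le> util u G div c"
proof -
  let ?r = "util u G"
  let ?A = "{Min {util u {g\<in>G. p g = i} | i. i < c} | p. \<forall>g\<in>G. p g < c}"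
  have bnd: "m \<le> ?r div c" if "m \<in> ?A" for m
  proof -
    obtain p where p: "\<forall>g\<in>G. p g < c" and m: "m = Min {util u {g\<in>G. p g = i} | i. i < c}"
      using \<open>m \<in> ?A\<close> by blast
    have eq: "{util u {g\<in>G. p g = i} | i. i < c} = (\<lambda>i. util u {g\<in>G. p g = i}) ` {..<c}" by auto
    have le: "m \<le> util u {g\<in>G. p g = i}" if "i < c" for i
      unfolding m eq using that by (intro Min_le) auto
    have "c * m = (\<Sum>i<c. m)" by simp
    also have "\<dots> \<le> (\<Sum>i<c. util u {g\<in>G. p g = i})" by (rule sum_mono) (use le in auto)
    also have "\<dots> = ?r" unfolding util_def
      using sum.group[OF assms(1), of "{..<c}" p u] p by auto
    finally have "c * m \<le> ?r" .
    then show ?thesis using assms(2)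
      by (metis div_le_mono nonzero_mult_div_cancel_left not_gr0)
  qed
  have "?A \<subseteq> {..?r div c}" using bnd by auto
  then have fin: "finite ?A" using finite_subset by blast
  have ne: "?A \<noteq> {}" using assms(2) by auto
  show ?thesis unfolding MMS_def using bnd fin ne by (intro Max.boundedI) auto
qed

lemma fair_suff:
  assumes "binary_on G u" "S \<subseteq> G" "finite G" "c > 0"
    and "card (S \<inter> {g\<in>G. u g = 1}) \<ge> card {g\<in>G. u g = 1} div c"
  shows "mms_fair c u G S"
proof -
  have "MMS c u G \<le> util u G div c" by (rule MMS_le) (use assms in auto)
  also have "util u G = card {g\<in>G. u g = 1}" using util_binary[OF assms(1) _ assms(3), of G]
    by (simp add: Int_absorb1)
  finally show ?thesis unfolding mms_fair_def using util_binary[OF assms(1-3)] assms(5) by linarith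
qed



lemma sumswap:
  assumes "finite A" "finite P" "\<forall>a\<in>A. card {S\<in>P. R a S} * K \<le> M"
  shows "(\<Sum>S\<in>P. card {a\<in>A. R a S}) * K \<le> card A * M"
proof -
  have "(\<Sum>S\<in>P. card {a\<in>A. R a S}) = (\<Sum>S\<in>P. \<Sum>a\<in>A. if R a S then 1 else 0)"
    using assms(1) by (simp add: sum.inter_filter[symmetric])
  also have "\<dots> = (\<Sum>a\<in>A. \<Sum>S\<in>P. if R a S then 1 else 0)" by (rule sum.swap)
  also have "\<dots> = (\<Sum>a\<in>A. card {S\<in>P. R a S})"
    using assms(2) by (simp add: sum.inter_filter[symmetric])
  finally have "(\<Sum>S\<in>P. card {a\<in>A. R a S}) * K = (\<Sum>a\<in>A. card {S\<in>P. R a S} * K)"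
    by (simp add: sum_distrib_right)
  also have "\<dots> \<le> (\<Sum>a\<in>A. M)" by (rule sum_mono) (use assms(3) in auto)
  also have "\<dots> = card A * M" by simp
  finally show ?thesis .
qed

lemma exists_le:
  assumes "finite P" "P \<noteq> {}" "(\<Sum>S\<in>P. f S) \<le> card P * (b::nat)"
  shows "\<exists>S\<in>P. f S \<le> b"
proof (rule ccontr)
  assume "\<not> ?thesis"
  then have "\<forall>S\<in>P. b < f S" by auto
  then have "(\<Sum>S\<in>P. b) < (\<Sum>S\<in>P. f S)" using assms by (intro sum_strict_mono) auto
  then show False using assms(3) by simp
qed

lemma finish:
  assumes "finite A" "card {a\<in>A. \<not> Q a} * 2^(c-1) \<le> card A"
  shows "real (card {a\<in>A. Q a}) \<ge> (1 - 1 / 2 ^ (c - 1)) * real (card A)"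
proof -
  have sp: "card {a\<in>A. Q a} + card {a\<in>A. \<not> Q a} = card A"
  proof -
    have "{a\<in>A. Q a} \<union> {a\<in>A. \<not> Q a} = A" by auto
    moreover have "card ({a\<in>A. Q a} \<union> {a\<in>A. \<not> Q a}) = card {a\<in>A. Q a} + card {a\<in>A. \<not> Q a}"
      using assms(1) by (intro card_Un_disjoint) auto
    ultimately show ?thesis by simp
  qed
  have "real (card {a\<in>A. \<not> Q a}) * 2^(c-1) \<le> real (card A)"
  proof -
    have "real (card {a\<in>A. \<not> Q a} * 2^(c-1)) \<le> real (card A)" using assms(2) by (simp only: of_nat_le_iff)
    then show ?thesis by simp
  qed
  then have b: "real (card {a\<in>A. \<not> Q a}) \<le> real (card A) / 2^(c-1)"
    by (simp add: field_simps)
  have "(1 - 1 / 2 ^ (c - 1)) * real (card A) = real (card A) - real (card A) / 2^(c-1)"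
    by (simp add: algebra_simps)
  also have "\<dots> \<le> real (card A) - real (card {a\<in>A. \<not> Q a})" using b by simp
  also have "\<dots> = real (card {a\<in>A. Q a})" using arg_cong[OF sp, of real] by simp
  finally show ?thesis .
qed

lemma group_bound:
  assumes "finite G" "c \<ge> 3" "finite A" "\<forall>a\<in>A. binary_on G (u a)"
    and h: "\<And>S. S \<subseteq> G \<Longrightarrow> h S \<subseteq> G"
    and hc: "\<And>D k. D \<subseteq> G \<Longrightarrow> k * c \<le> card D \<Longrightarrow>
       card {S. S \<subseteq> G \<and> card (h S \<inter> D) < k} * 2^c \<le> 2^(card G)"
  shows "(\<Sum>S\<in>Pow G. card {a\<in>A. \<not> mms_fair c (u a) G (h S)}) * 2^c \<le> card A * 2^(card G)"
proof (rule sumswap)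
  show "finite A" by (rule assms(3))
  show "finite (Pow G)" using assms(1) by simp
  show "\<forall>a\<in>A. card {S \<in> Pow G. \<not> mms_fair c (u a) G (h S)} * 2 ^ c \<le> 2 ^ card G"
  proof
    fix a assume a: "a \<in> A"
    let ?D = "{g\<in>G. u a g = 1}"
    let ?k = "card ?D div c"
    have sub: "{S \<in> Pow G. \<not> mms_fair c (u a) G (h S)} \<subseteq> {S. S \<subseteq> G \<and> card (h S \<inter> ?D) < ?k}"
    proof
      fix S assume S: "S \<in> {S \<in> Pow G. \<not> mms_fair c (u a) G (h S)}"
      then have "S \<subseteq> G" by auto
      have bin: "binary_on G (u a)" using assms(4) a by blast
      have hS: "h S \<subseteq> G" by (rule h) fact
      have c0: "c > 0" using assms(2) by simp
      have nf: "\<not> mms_fair c (u a) G (h S)" using S by simp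
      have "\<not> ?k \<le> card (h S \<inter> ?D)"
        using fair_suff[OF bin hS assms(1) c0] nf by blast
      then show "S \<in> {S. S \<subseteq> G \<and> card (h S \<inter> ?D) < ?k}" using \<open>S \<subseteq> G\<close> by auto
    qed
    have fin: "finite {S. S \<subseteq> G \<and> card (h S \<inter> ?D) < ?k}"
      by (rule finite_subset[of _ "Pow G"]) (blast, simp add: assms(1))
    have "card {S \<in> Pow G. \<not> mms_fair c (u a) G (h S)} * 2 ^ c \<le> card {S. S \<subseteq> G \<and> card (h S \<inter> ?D) < ?k} * 2^c"
      by (rule mult_right_mono[OF card_mono[OF fin sub]]) simp
    also have "\<dots> \<le> 2^card G"
    proof (rule hc)
      show "?D \<subseteq> G" by blast
      show "?k * c \<le> card ?D" by (rule div_times_less_eq_dividend)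
    qed
    finally show "card {S \<in> Pow G. \<not> mms_fair c (u a) G (h S)} * 2 ^ c \<le> 2 ^ card G" .
  qed
qed

theorem mainTheorem8:
  fixes c :: nat
    and G :: "'g set"
    and A1 :: "'a set" and A2 :: "'b set"
    and u1 :: "'a \<Rightarrow> 'g \<Rightarrow> nat" and u2 :: "'b \<Rightarrow> 'g \<Rightarrow> nat"
  assumes "c \<ge> 3"
    and "finite G"
    and "finite A1" and "A1 \<noteq> {}" and "finite A2" and "A2 \<noteq> {}"
    and "\<forall>a\<in>A1. binary_on G (u1 a)"
    and "\<forall>a\<in>A2. binary_on G (u2 a)"
  shows "\<exists>G1 G2. G1 \<inter> G2 = {} \<and> G1 \<union> G2 = G \<and>
      real (card {a\<in>A1. mms_fair c (u1 a) G G1}) \<ge> (1 - 1 / 2 ^ (c - 1)) * real (card A1) \<and>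
      real (card {a\<in>A2. mms_fair c (u2 a) G G2}) \<ge> (1 - 1 / 2 ^ (c - 1)) * real (card A2)"
proof -
  let ?n1 = "card A1" and ?n2 = "card A2" and ?N = "card G"
  let ?b1 = "\<lambda>S. card {a\<in>A1. \<not> mms_fair c (u1 a) G S}"
  let ?b2 = "\<lambda>S. card {a\<in>A2. \<not> mms_fair c (u2 a) G (G - S)}"
  have s1: "(\<Sum>S\<in>Pow G. ?b1 S) * 2^c \<le> ?n1 * 2^?N"
    by (rule group_bound[OF assms(2,1,3,7), where h="\<lambda>S. S"]) (assumption, rule bad_bound[OF assms(2) _ assms(1)], assumption+)
  have s2: "(\<Sum>S\<in>Pow G. ?b2 S) * 2^c \<le> ?n2 * 2^?N"
    by (rule group_bound[OF assms(2,1,5,8), where h="\<lambda>S. G - S"]) (blast, rule bad_bound_compl[OF assms(2) _ assms(1)], assumption+)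
  have n1: "?n1 > 0" and n2: "?n2 > 0" using assms by auto
  have "(\<Sum>S\<in>Pow G. (?b1 S * ?n2 + ?b2 S * ?n1) * 2^c)
      = ((\<Sum>S\<in>Pow G. ?b1 S) * 2^c) * ?n2 + ((\<Sum>S\<in>Pow G. ?b2 S) * 2^c) * ?n1"
    by (simp add: sum.distrib sum_distrib_right sum_distrib_left algebra_simps)
  also have "\<dots> \<le> (?n1 * 2^?N) * ?n2 + (?n2 * 2^?N) * ?n1"
    using s1 s2 by (intro add_mono mult_right_mono) auto
  also have "\<dots> = card (Pow G) * (2 * ?n1 * ?n2)"
    using assms(2) by (simp add: card_Pow algebra_simps)
  finally obtain S where S: "S \<in> Pow G" and Sb: "(?b1 S * ?n2 + ?b2 S * ?n1) * 2^c \<le> 2 * ?n1 * ?n2"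
    using exists_le[of "Pow G"] assms(2) by blast
  have c2: "(2::nat)^c = 2 * 2^(c-1)" using assms(1)
    by (metis Suc_diff_1 not_numeral_le_zero not_gr0 power_Suc)
  have Sb': "?b1 S * 2^(c-1) * ?n2 + ?b2 S * 2^(c-1) * ?n1 \<le> ?n1 * ?n2"
    using Sb unfolding c2 by (simp add: algebra_simps)
  have "?b1 S * 2^(c-1) * ?n2 \<le> ?n1 * ?n2" using Sb' by linarith
  then have h1: "?b1 S * 2^(c-1) \<le> ?n1" using n2 by simp
  have "?b2 S * 2^(c-1) * ?n1 \<le> ?n1 * ?n2" using Sb' by linarith
  then have "?b2 S * 2^(c-1) * ?n1 \<le> ?n2 * ?n1" by (simp only: mult.commute[of ?n1 ?n2])
  then have h2: "?b2 S * 2^(c-1) \<le> ?n2" using n1 by simp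
  show ?thesis
  proof (intro exI conjI)
    show "S \<inter> (G - S) = {}" by auto
    show "S \<union> (G - S) = G" using S by auto
    show "(1 - 1 / 2 ^ (c - 1)) * real ?n1 \<le> real (card {a\<in>A1. mms_fair c (u1 a) G S})"
      by (rule finish[OF assms(3) h1])
    show "(1 - 1 / 2 ^ (c - 1)) * real ?n2 \<le> real (card {a\<in>A2. mms_fair c (u2 a) G (G - S)})"
      by (rule finish[OF assms(5) h2])
  qed
qed

end
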